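(* Let $\lambda,\mu,\rho,\mathsf D>0$, $X=[-\frac{\mu\mathsf D}{2\lambda},\frac{\mu\mathsf D}{2\lambda}]$, and let $\hat f=\hat f_0$, i.e. $\hat f(x,y)=f(x,\hat y)$. 1. For $f=F_{0,0,\lambda,\mu,0}$ (i.e. $f(x,y)=-\frac{\lambda x^2}2+\mu xy$) and $Y=[-\frac12\mathsf D,\frac12\mathsf D]$, there exist $\hat y\in Y$ and $x^*\in X$ such that $\hat\varphi_{2\lambda}'(x^* )=0$ while $|\varphi_{2\lambda}'(x^* )|\ge\frac{\mu\mathsf D}{2}$. 2. If $\mu\ge\sqrt{2\lambda\rho/\mathsf D}$, then for $f=S_{\lambda,\rho,\mathsf D}$ and $Y=[0,\mathsf D]$ there exist $\hat y\in Y$ and $x^*\in X$ such that $\hat\varphi_{2\lambda}'(x^* )=0$ while $|\varphi_{2\lambda}'(x^* )|\ge\frac{\sqrt{\lambda\rho\mathsf D}}{3}$.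
   Context: For $k\in\mathbb N\cup\{0\}$, $s\in\{\pm1,0\}$, $\lambda>0$, $\mu\ge0$, $\rho\ge0$: $F_{k,s,\lambda,\mu,\rho}(x,y)=-\frac{\lambda x^2}{2}+\mu xy+\frac{s\rho|y|^{k+1}}{(k+1)!}$ on $\mathbb R\times\mathbb R$. Also $S_{\lambda,\rho,\mathsf D}(x,y)=-\frac{\lambda x^2}{4}+\frac{\rho y}{2}\big(\tanh\big(\sqrt{\tfrac{\lambda}{\rho\mathsf D}}\,x\big)-1\big)$. Given $f$, $X,Y\subseteq\mathbb R$ and $\hat y\in Y$: $\varphi(x)=\max_{y\in Y}f(x,y)$, $\hat\varphi(x)=\max_{y\in Y}\hat f(x,y)$, and for a function $\phi$ on $X$, $\phi_{2\lambda}(x)=\min_{u\in X}\{\phi(u)+\lambda(u-x)^2\}$ (Moreau envelope with parameter $2\lambda$); $'$ denotes the derivative in $x$. *)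

theory Defs
  imports "HOL-Analysis.Analysis"
begin

definition F_fun :: "nat \<Rightarrow> real \<Rightarrow> real \<Rightarrow> real \<Rightarrow> real \<Rightarrow> real \<Rightarrow> real \<Rightarrow> real" where
  "F_fun k s lam mu rho x y =
     - lam * x\<^sup>2 / 2 + mu * x * y + s * rho * \<bar>y\<bar> ^ (k + 1) / fact (k + 1)"

definition S_fun :: "real \<Rightarrow> real \<Rightarrow> real \<Rightarrow> real \<Rightarrow> real \<Rightarrow> real" where
  "S_fun lam rho D x y =
     - lam * x\<^sup>2 / 4 + rho * y / 2 * (tanh (sqrt (lam / (rho * D)) * x) - 1)"

definition max_fun :: "(real \<Rightarrow> real \<Rightarrow> real) \<Rightarrow> real set \<Rightarrow> real \<Rightarrow> real" where
  "max_fun f Y x = (SUP y\<in>Y. f x y)"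

definition hat_fun :: "(real \<Rightarrow> real \<Rightarrow> real) \<Rightarrow> real \<Rightarrow> real \<Rightarrow> real \<Rightarrow> real" where
  "hat_fun f yh x y = f x yh"

text \<open>Moreau envelope with parameter 2 lam: phi_{2 lam}(x) = min_{u in X} phi(u) + lam (u-x)^2\<close>
definition moreau_env :: "(real \<Rightarrow> real) \<Rightarrow> real set \<Rightarrow> real \<Rightarrow> real \<Rightarrow> real" where
  "moreau_env phi X lam x = (INF u\<in>X. phi u + lam * (u - x)\<^sup>2)"

end

theory Submission
  imports Defs
begin

lemma quad_deriv:
  fixes f :: "real \<Rightarrow> real"
  assumes r: "r > 0" and b: "\<And>x. \<bar>x - x0\<bar> < r \<Longrightarrow> \<bar>f x - f x0 - d * (x - x0)\<bar> \<le> K * (x - x0)\<^sup>2"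
  shows "(f has_real_derivative d) (at x0)"
proof -
  have "((\<lambda>h. (f (x0 + h) - f x0) / h - d) \<longlongrightarrow> 0) (at 0)"
  proof (rule Lim_null_comparison)
    show "\<forall>\<^sub>F h in at 0. norm ((f (x0 + h) - f x0) / h - d) \<le> K * \<bar>h\<bar>"
    proof -
      have "norm ((f (x0 + h) - f x0) / h - d) \<le> K * \<bar>h\<bar>" if h: "h \<noteq> 0" "\<bar>h\<bar> < r" for h
      proof -
        have 1: "\<bar>f (x0 + h) - f x0 - d * h\<bar> \<le> K * h\<^sup>2" using b[of "x0+h"] h by simp
        have "(f (x0 + h) - f x0) / h - d = (f (x0 + h) - f x0 - d * h) / h" using h by (simp add: field_simps)
        then have "norm ((f (x0 + h) - f x0) / h - d) = \<bar>f (x0 + h) - f x0 - d * h\<bar> / \<bar>h\<bar>" by simp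
        also have "\<dots> \<le> K * h\<^sup>2 / \<bar>h\<bar>" using 1 h by (simp add: divide_right_mono)
        also have "\<dots> = K * \<bar>h\<bar>" proof -
          have "h\<^sup>2 = \<bar>h\<bar> * \<bar>h\<bar>" by (simp add: power2_eq_square)
          then show ?thesis using h by (simp only:) (simp add: field_simps)
        qed
        finally show ?thesis .
      qed
      then show ?thesis unfolding eventually_at using r by (auto simp: dist_norm)
    qed
    have "((\<lambda>h. K * \<bar>h\<bar>) \<longlongrightarrow> K * \<bar>0\<bar>) (at (0::real))"
      by (intro tendsto_intros)
    then show "((\<lambda>h. K * \<bar>h\<bar>) \<longlongrightarrow> 0) (at (0::real))" by simp
  qed
  then show ?thesis unfolding DERIV_def using LIM_zero_iff by blast
qed

lemma env_bounds:
  fixes phi :: "real \<Rightarrow> real"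
  assumes ne: "u0 \<in> X" and lb: "\<And>u. u \<in> X \<Longrightarrow> phi u + lam * (u - x)\<^sup>2 \<ge> L"
  shows "moreau_env phi X lam x \<ge> L" "moreau_env phi X lam x \<le> phi u0 + lam * (u0 - x)\<^sup>2"
proof -
  show "moreau_env phi X lam x \<ge> L" unfolding moreau_env_def
    using ne lb by (intro cINF_greatest) auto
  have "bdd_below ((\<lambda>u. phi u + lam * (u - x)\<^sup>2) ` X)"
    using lb by (auto simp: bdd_below_def)
  then show "moreau_env phi X lam x \<le> phi u0 + lam * (u0 - x)\<^sup>2" unfolding moreau_env_def
    using ne by (intro cINF_lower) auto
qed

lemma env_eq:
  fixes phi :: "real \<Rightarrow> real"
  assumes ne: "u0 \<in> X" and lb: "\<And>u. u \<in> X \<Longrightarrow> phi u + lam * (u - x)\<^sup>2 \<ge> L"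
    and eq: "phi u0 + lam * (u0 - x)\<^sup>2 = L"
  shows "moreau_env phi X lam x = L"
  using env_bounds[OF ne lb] eq by linarith

lemma hat_env_deriv:
  fixes phi :: "real \<Rightarrow> real"
  assumes lam: "lam > 0" and m: "m > 0" and xs: "xs \<in> X"
    and q: "\<And>u. u \<in> X \<Longrightarrow> phi u + lam * (u - xs)\<^sup>2 \<ge> phi xs + m * (u - xs)\<^sup>2"
  shows "(moreau_env phi X lam has_real_derivative 0) (at xs)"
proof -
  have lb: "phi u + lam * (u - x)\<^sup>2 \<ge> phi xs + (lam - lam\<^sup>2 / m) * (x - xs)\<^sup>2" if u: "u \<in> X" for u x
  proof -
    have e: "phi u + lam * (u - x)\<^sup>2 = (phi u + lam * (u - xs)\<^sup>2) + 2 * lam * (u - xs) * (xs - x) + lam * (x - xs)\<^sup>2"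
      by (simp add: power2_eq_square algebra_simps)
    have sq: "m * (m * (u - xs)\<^sup>2 + 2 * lam * (u - xs) * (xs - x)) + lam\<^sup>2 * (x - xs)\<^sup>2 = (m * (u - xs) - lam * (x - xs))\<^sup>2"
      by (simp add: power2_eq_square algebra_simps)
    have "m * (m * (u - xs)\<^sup>2 + 2 * lam * (u - xs) * (xs - x)) \<ge> - (lam\<^sup>2 * (x - xs)\<^sup>2)"
      using sq by (metis add.commute le_add_same_cancel1 minus_add_cancel neg_le_iff_le zero_le_power2 add_uminus_conv_diff diff_ge_0_iff_ge)
    then have "m * (u - xs)\<^sup>2 + 2 * lam * (u - xs) * (xs - x) \<ge> - (lam\<^sup>2 / m) * (x - xs)\<^sup>2"
      using m by (simp add: field_simps)
    then show ?thesis using e q[OF u] by (simp add: algebra_simps)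
  qed
  have E0: "moreau_env phi X lam xs = phi xs"
    by (rule env_eq[OF xs, where L="phi xs"]) (use lb[of _ xs] in simp_all)
  show ?thesis
  proof (rule quad_deriv[of 1 _ _ _ "lam + lam\<^sup>2 / m"])
    fix x :: real
    have a: "moreau_env phi X lam x \<ge> phi xs + (lam - lam\<^sup>2 / m) * (x - xs)\<^sup>2"
      by (rule env_bounds(1)[OF xs lb])
    have b: "moreau_env phi X lam x \<le> phi xs + lam * (xs - x)\<^sup>2"
      by (rule env_bounds(2)[OF xs lb])
    have c: "(xs - x)\<^sup>2 = (x - xs)\<^sup>2" by (simp add: power2_commute)
    have "0 \<le> lam\<^sup>2 / m * (x - xs)\<^sup>2" using m by simp
    have "0 \<le> lam * (x - xs)\<^sup>2" using lam by simp
    show "\<bar>moreau_env phi X lam x - moreau_env phi X lam xs - 0 * (x - xs)\<bar> \<le> (lam + lam\<^sup>2 / m) * (x - xs)\<^sup>2"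
    proof -
      have d1: "(lam + lam\<^sup>2 / m) * (x - xs)\<^sup>2 = lam * (x - xs)\<^sup>2 + lam\<^sup>2 / m * (x - xs)\<^sup>2"
        by (rule distrib_right)
      have d2: "(lam - lam\<^sup>2 / m) * (x - xs)\<^sup>2 = lam * (x - xs)\<^sup>2 - lam\<^sup>2 / m * (x - xs)\<^sup>2"
        by (rule left_diff_distrib)
      show ?thesis unfolding E0 abs_le_iff mult_zero_left diff_zero d1 using a b[unfolded c] d2 \<open>0 \<le> lam\<^sup>2 / m * (x - xs)\<^sup>2\<close> \<open>0 \<le> lam * (x - xs)\<^sup>2\<close> by (intro conjI; linarith)
    qed
  qed simp
qed

lemma tanh_conv:
  fixes lam a B xs :: real
  assumes lam: "lam > 0" and B0: "0 \<le> B" and Bl: "2 * B * a\<^sup>2 \<le> lam"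
    and st: "- lam * xs / 2 + B * a * (1 - tanh (a * xs) ^ 2) = 0"
  defines "G \<equiv> \<lambda>u. - lam * u\<^sup>2 / 4 + B * (tanh (a * u) - 1) + 3 * lam / 4 * (u - xs)\<^sup>2"
  shows "G u \<ge> G xs"
proof -
  define G' where "G' = (\<lambda>u. - lam * u / 2 + B * a * (1 - tanh (a * u) ^ 2) + 3 * lam / 2 * (u - xs))"
  define G'' where "G'' = (\<lambda>u. lam - 2 * B * a\<^sup>2 * (tanh (a * u) * (1 - tanh (a * u) ^ 2)))"
  have dG: "(G has_real_derivative G' u) (at u)" for u
    unfolding G_def G'_def
    by (auto intro!: derivative_eq_intros simp: power2_eq_square field_simps)
  have dG': "(G' has_real_derivative G'' u) (at u)" for u
    unfolding G''_def G'_def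
    by (auto intro!: derivative_eq_intros simp: power2_eq_square algebra_simps)
  have G''0: "G'' u \<ge> 0" for u
  proof -
    have t: "\<bar>tanh (a * u)\<bar> < 1" using tanh_real_bounds[of "a*u"] by auto
    have "tanh (a * u) * (1 - tanh (a * u) ^ 2) \<le> 1"
    proof -
      have "0 \<le> 1 - tanh (a * u) ^ 2" using t by (simp add: abs_square_less_1 less_imp_le)
      moreover have "1 - tanh (a * u) ^ 2 \<le> 1" by simp
      ultimately have "tanh (a * u) * (1 - tanh (a * u) ^ 2) \<le> \<bar>tanh (a * u)\<bar> * 1"
        by (metis abs_ge_self abs_mult abs_of_nonneg mult_mono abs_ge_zero order.trans)
      then show ?thesis using t by simp
    qed
    then have "2 * B * a\<^sup>2 * (tanh (a * u) * (1 - tanh (a * u) ^ 2)) \<le> 2 * B * a\<^sup>2 * 1"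
      using B0 by (intro mult_left_mono) auto
    then show ?thesis unfolding G''_def using Bl by simp
  qed
  have G'xs: "G' xs = 0" unfolding G'_def using st by simp
  show ?thesis
  proof (cases "u \<ge> xs")
    case True
    have "G' v \<ge> 0" if "v \<in> {xs..u}" for v
      using deriv_nonneg_imp_mono[of xs v G' G'', OF dG' G''0] that G'xs by auto
    then show ?thesis using deriv_nonneg_imp_mono[of xs u G G', OF dG] True by auto
  next
    case False
    have "G' v \<le> 0" if "v \<in> {u..xs}" for v
      using deriv_nonneg_imp_mono[of v xs G' G'', OF dG' G''0] that G'xs by auto
    then show ?thesis using deriv_nonpos_imp_antimono[of u xs G G', OF dG] False by auto
  qed
qed


theorem proposition3:
  fixes lam mu rho D :: real
  assumes "lam > 0" and "mu > 0" and "rho > 0" and "D > 0"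
  defines "X \<equiv> {- (mu * D / (2 * lam)) .. mu * D / (2 * lam)}"
  shows
   "(let f = F_fun 0 0 lam mu 0; Y = {- D / 2 .. D / 2} in
      \<exists>yh\<in>Y. \<exists>xs\<in>X.
        (moreau_env (max_fun (hat_fun f yh) Y) X lam has_real_derivative 0) (at xs) \<and>
        (\<exists>d. (moreau_env (max_fun f Y) X lam has_real_derivative d) (at xs) \<and>
             \<bar>d\<bar> \<ge> mu * D / 2))
    \<and>
    (mu \<ge> sqrt (2 * lam * rho / D) \<longrightarrow>
     (let f = S_fun lam rho D; Y = {0 .. D} in
      \<exists>yh\<in>Y. \<exists>xs\<in>X.
        (moreau_env (max_fun (hat_fun f yh) Y) X lam has_real_derivative 0) (at xs) \<and>
        (\<exists>d. (moreau_env (max_fun f Y) X lam has_real_derivative d) (at xs) \<and>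
             \<bar>d\<bar> \<ge> sqrt (lam * rho * D) / 3)))"
proof -
  note lam = \<open>lam > 0\<close> and mu = \<open>mu > 0\<close> and rho = \<open>rho > 0\<close> and D = \<open>D > 0\<close>
  define c where "c = mu * D / (2 * lam)"
  have X: "X = {-c..c}" unfolding X_def c_def by simp
  have c0: "c > 0" unfolding c_def using lam mu D by simp
  have muD: "mu * D = 2 * lam * c" unfolding c_def using lam by simp
  have P1: "\<exists>yh\<in>{- D / 2 .. D / 2}. \<exists>xs\<in>X.
        (moreau_env (max_fun (hat_fun (F_fun 0 0 lam mu 0) yh) {- D / 2 .. D / 2}) X lam has_real_derivative 0) (at xs) \<and>
        (\<exists>d. (moreau_env (max_fun (F_fun 0 0 lam mu 0) {- D / 2 .. D / 2}) X lam has_real_derivative d) (at xs) \<and>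
             \<bar>d\<bar> \<ge> mu * D / 2)"
  proof -
    let ?Y = "{- D / 2 .. D / 2} :: real set"
    let ?f = "F_fun 0 0 lam mu 0"
    have Fe: "?f x y = - lam * x\<^sup>2 / 2 + mu * x * y" for x y by (simp add: F_fun_def)
    have Yne: "?Y \<noteq> {}" using D by simp
    have hat: "max_fun (hat_fun ?f (D / 4)) ?Y = (\<lambda>u. - lam * u\<^sup>2 / 2 + lam * c / 2 * u)"
    proof
      fix u
      have "mu * u * (D / 4) = (mu * D) * u / 4" by simp
      then have "mu * u * (D / 4) = lam * c / 2 * u" unfolding muD by (simp add: algebra_simps)
      then show "max_fun (hat_fun ?f (D / 4)) ?Y u = - lam * u\<^sup>2 / 2 + lam * c / 2 * u"
        unfolding max_fun_def hat_fun_def Fe using Yne by simp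
    qed
    have phi: "max_fun ?f ?Y = (\<lambda>u. - lam * u\<^sup>2 / 2 + lam * c * \<bar>u\<bar>)"
    proof
      fix u
      have mx: "mu * u * y \<le> lam * c * \<bar>u\<bar>" if y: "y \<in> ?Y" for y
      proof -
        have "\<bar>y\<bar> \<le> D / 2" using y by auto
        then have "\<bar>u\<bar> * \<bar>y\<bar> \<le> \<bar>u\<bar> * (D / 2)" by (intro mult_left_mono) auto
        then have "mu * (\<bar>u\<bar> * \<bar>y\<bar>) \<le> mu * (\<bar>u\<bar> * (D / 2))" by (rule mult_left_mono) (use mu in simp)
        moreover have "mu * u * y \<le> mu * (\<bar>u\<bar> * \<bar>y\<bar>)" using mu
          by (metis abs_ge_self abs_mult mult.assoc mult_left_mono less_imp_le)
        moreover have "mu * (\<bar>u\<bar> * (D / 2)) = lam * c * \<bar>u\<bar>" using muD by (simp add: algebra_simps)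
        ultimately show ?thesis by linarith
      qed
      define y0 where "y0 = (if u \<ge> 0 then D / 2 else - D / 2)"
      have y0: "y0 \<in> ?Y" unfolding y0_def using D by auto
      have "mu * u * y0 = lam * c * \<bar>u\<bar>"
        unfolding y0_def using muD by (auto simp: algebra_simps)
      then show "max_fun ?f ?Y u = - lam * u\<^sup>2 / 2 + lam * c * \<bar>u\<bar>"
        unfolding max_fun_def Fe
        by (intro cSup_eq_maximum) (use y0 mx in \<open>auto intro!: image_eqI[of _ _ y0]\<close>)
    qed
    define xs where "xs = c / 2"
    have xsX: "xs \<in> X" unfolding X xs_def using c0 by auto
    have D4: "D / 4 \<in> ?Y" using D by auto
    have hatd: "(moreau_env (max_fun (hat_fun ?f (D / 4)) ?Y) X lam has_real_derivative 0) (at xs)"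
      unfolding hat
    proof (rule hat_env_deriv[OF lam _ xsX, of "lam / 2"])
      fix u
      show "- lam * xs\<^sup>2 / 2 + lam * c / 2 * xs + lam / 2 * (u - xs)\<^sup>2
            \<le> - lam * u\<^sup>2 / 2 + lam * c / 2 * u + lam * (u - xs)\<^sup>2"
        unfolding xs_def by (simp add: power2_eq_square field_simps)
    qed (use lam in simp)
    define P where "P = (\<lambda>x. if x \<le> c / 2 then lam * x\<^sup>2 else lam * x\<^sup>2 - 2 * lam * (x - c / 2)\<^sup>2)"
    have Eeq: "moreau_env (max_fun ?f ?Y) X lam x = P x" if x: "\<bar>x - xs\<bar> < c / 2" for x
    proof -
      have x0: "0 < x" "x < c" using x unfolding xs_def abs_less_iff by linarith+
      show ?thesis unfolding phi
      proof (cases "x \<le> c / 2")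
        case True
        show "moreau_env (\<lambda>u. - lam * u\<^sup>2 / 2 + lam * c * \<bar>u\<bar>) X lam x = P x"
        proof (rule env_eq[of 0])
          show "0 \<in> X" unfolding X using c0 by auto
          show "- lam * 0\<^sup>2 / 2 + lam * c * \<bar>0\<bar> + lam * (0 - x)\<^sup>2 = P x"
            unfolding P_def using True by simp
          fix u assume "u \<in> X"
          have a: "u * x \<le> \<bar>u\<bar> * x" using x0 by (intro mult_right_mono) auto
          have b: "\<bar>u\<bar> * x \<le> \<bar>u\<bar> * (c / 2)" using True by (intro mult_left_mono) auto
          have "u\<^sup>2 / 2 + c * \<bar>u\<bar> - 2 * u * x \<ge> 0" 
          proof -
            have e1: "\<bar>u\<bar> * (c / 2) = c * \<bar>u\<bar> / 2" by simp
            have e2: "2 * u * x = 2 * (u * x)" by simp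
            show ?thesis using a b e1 e2 zero_le_power2[of u] by linarith
          qed
          then have "lam * (u\<^sup>2 / 2 + c * \<bar>u\<bar> - 2 * u * x) \<ge> 0" using lam by simp
          moreover have "- lam * u\<^sup>2 / 2 + lam * c * \<bar>u\<bar> + lam * (u - x)\<^sup>2 - lam * x\<^sup>2
              = lam * (u\<^sup>2 / 2 + c * \<bar>u\<bar> - 2 * u * x)"
            by (simp add: power2_eq_square algebra_simps)
          ultimately show "- lam * u\<^sup>2 / 2 + lam * c * \<bar>u\<bar> + lam * (u - x)\<^sup>2 \<ge> P x"
            unfolding P_def using True by simp
        qed
      next
        case False
        show "moreau_env (\<lambda>u. - lam * u\<^sup>2 / 2 + lam * c * \<bar>u\<bar>) X lam x = P x"
        proof (rule env_eq[of "2 * x - c"])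
          show "2 * x - c \<in> X" unfolding X using False x0 by auto
          have "\<bar>2 * x - c\<bar> = 2 * x - c" using False by simp
          then show "- lam * (2 * x - c)\<^sup>2 / 2 + lam * c * \<bar>2 * x - c\<bar> + lam * (2 * x - c - x)\<^sup>2 = P x"
            unfolding P_def using False by (simp add: power2_eq_square field_simps)
          fix u assume "u \<in> X"
          have "u\<^sup>2 / 2 + c * \<bar>u\<bar> - 2 * u * x + 2 * (x - c / 2)\<^sup>2 \<ge> 0"
          proof (cases "u \<ge> 0")
            case True
            have "u\<^sup>2 / 2 + c * \<bar>u\<bar> - 2 * u * x + 2 * (x - c / 2)\<^sup>2 = (u - (2 * x - c))\<^sup>2 / 2"
              using True by (simp add: power2_eq_square field_simps)
            then show ?thesis using zero_le_power2[of "u - (2 * x - c)"] by linarith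
          next
            case False
            have "c * \<bar>u\<bar> - 2 * u * x = - u * (c + 2 * x)" using False by (simp add: algebra_simps)
            moreover have "- u * (c + 2 * x) \<ge> 0" using False x0 c0 by (intro mult_nonneg_nonneg) auto
            ultimately show ?thesis using zero_le_power2[of u] zero_le_power2[of "x - c / 2"] by linarith
          qed
          then have "lam * (u\<^sup>2 / 2 + c * \<bar>u\<bar> - 2 * u * x + 2 * (x - c / 2)\<^sup>2) \<ge> 0" using lam by simp
          moreover have "- lam * u\<^sup>2 / 2 + lam * c * \<bar>u\<bar> + lam * (u - x)\<^sup>2 - (lam * x\<^sup>2 - 2 * lam * (x - c / 2)\<^sup>2)
              = lam * (u\<^sup>2 / 2 + c * \<bar>u\<bar> - 2 * u * x + 2 * (x - c / 2)\<^sup>2)"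
            by (simp add: power2_eq_square algebra_simps)
          ultimately show "- lam * u\<^sup>2 / 2 + lam * c * \<bar>u\<bar> + lam * (u - x)\<^sup>2 \<ge> P x"
            unfolding P_def using False by simp
        qed
      qed
    qed
    have trued: "(moreau_env (max_fun ?f ?Y) X lam has_real_derivative lam * c) (at xs)"
    proof (rule quad_deriv[of "c / 2" _ _ _ lam])
      show "0 < c / 2" using c0 by simp
      fix x assume x: "\<bar>x - xs\<bar> < c / 2"
      have E1: "moreau_env (max_fun ?f ?Y) X lam x = P x" using Eeq x by blast
      have E2: "moreau_env (max_fun ?f ?Y) X lam xs = P xs" using Eeq[of xs] c0 by simp
      have "\<bar>P x - P xs - lam * c * (x - xs)\<bar> \<le> lam * (x - xs)\<^sup>2"
      proof (cases "x \<le> c / 2")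
        case True
        have "P x - P xs - lam * c * (x - xs) = lam * (x - xs)\<^sup>2"
          unfolding P_def xs_def using True by (simp add: power2_eq_square field_simps)
        then show ?thesis using lam by simp
      next
        case False
        have "P x - P xs - lam * c * (x - xs) = - (lam * (x - xs)\<^sup>2)"
          unfolding P_def xs_def using False by (simp add: power2_eq_square field_simps)
        then show ?thesis using lam by simp
      qed
      then show "\<bar>moreau_env (max_fun ?f ?Y) X lam x - moreau_env (max_fun ?f ?Y) X lam xs - lam * c * (x - xs)\<bar> \<le> lam * (x - xs)\<^sup>2"
        using E1 E2 by simp
    qed
    have "\<bar>lam * c\<bar> \<ge> mu * D / 2" using muD lam c0 by simp
    then show ?thesis using D4 xsX hatd trued by blast
  qed
  have P2: "\<exists>yh\<in>{0 .. D}. \<exists>xs\<in>X.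
        (moreau_env (max_fun (hat_fun (S_fun lam rho D) yh) {0 .. D}) X lam has_real_derivative 0) (at xs) \<and>
        (\<exists>d. (moreau_env (max_fun (S_fun lam rho D) {0 .. D}) X lam has_real_derivative d) (at xs) \<and>
             \<bar>d\<bar> \<ge> sqrt (lam * rho * D) / 3)" if mub: "mu \<ge> sqrt (2 * lam * rho / D)"
  proof -
    let ?Y = "{0 .. D} :: real set"
    let ?S = "S_fun lam rho D"
    define a where "a = sqrt (lam / (rho * D))"
    have a0: "a > 0" unfolding a_def using lam rho D by simp
    have a2: "a\<^sup>2 = lam / (rho * D)" unfolding a_def using lam rho D by simp
    have a2': "rho * D * a\<^sup>2 = lam" unfolding a2 using rho D by simp
    define T0 where "T0 = tanh (1 / 2 :: real)"
    have T00: "0 \<le> T0" unfolding T0_def by simp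
    have T01: "T0 \<le> 1 / 2"
    proof -
      have e: "exp (-1::real) \<ge> 1 / 3"
      proof -
        have "exp (-1::real) = inverse (exp 1)" by (simp add: exp_minus)
        moreover have "inverse (exp 1) \<ge> inverse (3::real)" using exp_le by (intro le_imp_inverse_le) auto
        ultimately show ?thesis by simp
      qed
      have "T0 = (1 - exp (-1)) / (1 + exp (-1))" unfolding T0_def tanh_real_altdef by simp
      also have "\<dots> \<le> 1 / 2" using e by (simp add: divide_le_eq)
      finally show ?thesis .
    qed
    have T02: "1 - T0\<^sup>2 \<ge> 3 / 4"
    proof -
      have "T0\<^sup>2 \<le> (1/2)\<^sup>2" using T00 T01 by (intro power_mono) auto
      then show ?thesis by (simp add: power2_eq_square)
    qed
    define yh where "yh = D / (2 * (1 - T0\<^sup>2))"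
    have yh0: "yh \<ge> 0" unfolding yh_def using D T02 by simp
    have yhD: "yh \<le> D"
    proof -
      have "D \<le> D * (2 * (1 - T0\<^sup>2))" using D T02 by simp
      then show ?thesis unfolding yh_def using T02 by (simp add: divide_le_eq)
    qed
    have yhY: "yh \<in> ?Y" using yh0 yhD by simp
    define xs where "xs = 1 / (2 * a)"
    have axs: "a * xs = 1 / 2" unfolding xs_def using a0 by simp
    have xs0: "xs > 0" unfolding xs_def using a0 by simp
    have c2: "c\<^sup>2 \<ge> rho * D / (2 * lam)"
    proof -
      have "sqrt (2 * lam * rho / D) \<ge> 0" using lam rho D by simp
      then have "mu\<^sup>2 \<ge> (sqrt (2 * lam * rho / D))\<^sup>2" using mub by (intro power_mono) auto
      moreover have "0 \<le> 2 * lam * rho / D" using lam rho D by simp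
      ultimately have m2: "mu\<^sup>2 \<ge> 2 * lam * rho / D" by simp
      have "c\<^sup>2 = mu\<^sup>2 * D\<^sup>2 / (4 * lam\<^sup>2)" unfolding c_def by (simp add: power2_eq_square)
      also have "\<dots> \<ge> (2 * lam * rho / D) * D\<^sup>2 / (4 * lam\<^sup>2)"
        using m2 lam D by (intro divide_right_mono mult_right_mono) auto
      also have "(2 * lam * rho / D) * D\<^sup>2 / (4 * lam\<^sup>2) = rho * D / (2 * lam)"
        using lam D by (simp add: power2_eq_square field_simps)
      finally show ?thesis .
    qed
    have xsc: "4 * xs / 3 < c"
    proof -
      have "(4 * xs / 3)\<^sup>2 = 4 / (9 * a\<^sup>2)" unfolding xs_def using a0 by (simp add: power2_eq_square field_simps)
      also have "\<dots> = 4 * rho * D / (9 * lam)" unfolding a2 using lam rho D by (simp add: field_simps)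
      also have "\<dots> < rho * D / (2 * lam)" using lam rho D by (simp add: field_simps)
      finally have "(4 * xs / 3)\<^sup>2 < c\<^sup>2" using c2 by linarith
      then show ?thesis using c0 xs0 power_less_imp_less_base[of "4 * xs / 3" 2 c] by linarith
    qed
    have xsX: "xs \<in> X" unfolding X using xs0 xsc by auto
    have hat: "max_fun (hat_fun ?S yh) ?Y = (\<lambda>u. ?S u yh)"
      unfolding max_fun_def hat_fun_def using D by auto
    have hatd: "(moreau_env (max_fun (hat_fun ?S yh) ?Y) X lam has_real_derivative 0) (at xs)"
      unfolding hat
    proof (rule hat_env_deriv[OF lam _ xsX, of "lam / 4"])
      fix u
      define B where "B = rho * yh / 2"
      have B0: "0 \<le> B" unfolding B_def using rho yh0 by simp
      have Bl: "2 * B * a\<^sup>2 \<le> lam"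
      proof -
        have "2 * B * a\<^sup>2 = yh * (rho * D * a\<^sup>2) / D" unfolding B_def using D by simp
        also have "\<dots> = yh * lam / D" using a2' by simp
        also have "\<dots> \<le> D * lam / D" using yhD lam D by (intro divide_right_mono mult_right_mono) auto
        finally show ?thesis using D by simp
      qed
      have st: "- lam * xs / 2 + B * a * (1 - tanh (a * xs) ^ 2) = 0"
      proof -
        have "B * a * (1 - tanh (a * xs) ^ 2) = rho * D * a / 4"
          unfolding B_def yh_def axs T0_def[symmetric] using T02 by (simp add: field_simps)
        also have "\<dots> = lam / (4 * a)" using a2' a0 by (simp add: power2_eq_square field_simps)
        also have "\<dots> = lam * xs / 2" unfolding xs_def by simp
        finally show ?thesis by simp
      qed
      have G: "- lam * xs\<^sup>2 / 4 + B * (tanh (a * xs) - 1) + 3 * lam / 4 * (xs - xs)\<^sup>2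
          \<le> - lam * u\<^sup>2 / 4 + B * (tanh (a * u) - 1) + 3 * lam / 4 * (u - xs)\<^sup>2"
        using tanh_conv[OF lam B0 Bl st, of u] by simp
      have Se: "?S v yh = - lam * v\<^sup>2 / 4 + B * (tanh (a * v) - 1)" for v
        unfolding S_fun_def B_def a_def by simp
      show "?S xs yh + lam / 4 * (u - xs)\<^sup>2 \<le> ?S u yh + lam * (u - xs)\<^sup>2"
        unfolding Se using G by (simp add: algebra_simps)
    qed (use lam in simp)
    have phi: "max_fun ?S ?Y = (\<lambda>u. - lam * u\<^sup>2 / 4)"
    proof
      fix u
      have le: "?S u y \<le> - lam * u\<^sup>2 / 4" if y: "y \<in> ?Y" for y
      proof -
        have "tanh (sqrt (lam / (rho * D)) * u) - 1 \<le> 0" using tanh_real_lt_1[of "sqrt (lam / (rho * D)) * u"] by linarith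
        moreover have "rho * y / 2 \<ge> 0" using rho y by simp
        ultimately have "rho * y / 2 * (tanh (sqrt (lam / (rho * D)) * u) - 1) \<le> 0"
          by (simp add: mult_nonneg_nonpos)
        then show ?thesis unfolding S_fun_def by simp
      qed
      have "0 \<in> ?Y" using D by simp
      moreover have "?S u 0 = - lam * u\<^sup>2 / 4" unfolding S_fun_def by simp
      ultimately show "max_fun ?S ?Y u = - lam * u\<^sup>2 / 4"
        unfolding max_fun_def
        by (intro cSup_eq_maximum) (use le in \<open>auto intro!: image_eqI[of _ _ 0]\<close>)
    qed
    define r where "r = 3 * c / 4 - xs"
    have r0: "r > 0" unfolding r_def using xsc by simp
    have Eeq: "moreau_env (max_fun ?S ?Y) X lam x = - lam * x\<^sup>2 / 3" if x: "\<bar>x - xs\<bar> < r" for x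
      unfolding phi
    proof (rule env_eq[of "4 * x / 3"])
      have "\<bar>x\<bar> < 3 * c / 4" using x xs0 unfolding r_def abs_less_iff by linarith
      then show "4 * x / 3 \<in> X" unfolding X by (auto simp: abs_less_iff)
      show "- lam * (4 * x / 3)\<^sup>2 / 4 + lam * (4 * x / 3 - x)\<^sup>2 = - lam * x\<^sup>2 / 3"
        by (simp add: power2_eq_square field_simps)
      fix u
      have "- lam * u\<^sup>2 / 4 + lam * (u - x)\<^sup>2 - (- lam * x\<^sup>2 / 3) = 3 * lam / 4 * (u - 4 * x / 3)\<^sup>2"
        by (simp add: power2_eq_square field_simps)
      moreover have "3 * lam / 4 * (u - 4 * x / 3)\<^sup>2 \<ge> 0" using lam by simp
      ultimately show "- lam * x\<^sup>2 / 3 \<le> - lam * u\<^sup>2 / 4 + lam * (u - x)\<^sup>2" by linarith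
    qed
    have trued: "(moreau_env (max_fun ?S ?Y) X lam has_real_derivative (- 2 * lam * xs / 3)) (at xs)"
    proof (rule quad_deriv[OF r0, of _ _ _ "lam / 3"])
      fix x assume x: "\<bar>x - xs\<bar> < r"
      have "\<bar>- lam * x\<^sup>2 / 3 - (- lam * xs\<^sup>2 / 3) - (- 2 * lam * xs / 3) * (x - xs)\<bar> = lam / 3 * (x - xs)\<^sup>2"
      proof -
        have "- lam * x\<^sup>2 / 3 - (- lam * xs\<^sup>2 / 3) - (- 2 * lam * xs / 3) * (x - xs) = - (lam / 3 * (x - xs)\<^sup>2)"
          by (simp add: power2_eq_square field_simps)
        then show ?thesis using lam by simp
      qed
      then show "\<bar>moreau_env (max_fun ?S ?Y) X lam x - moreau_env (max_fun ?S ?Y) X lam xs - (- 2 * lam * xs / 3) * (x - xs)\<bar> \<le> lam / 3 * (x - xs)\<^sup>2"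
        using Eeq[OF x] Eeq[of xs] r0 by simp
    qed
    have sq: "sqrt (lam * rho * D) = lam / a"
    proof -
      have "a * sqrt (lam * rho * D) = sqrt (lam / (rho * D) * (lam * rho * D))"
        unfolding a_def by (rule real_sqrt_mult[symmetric])
      also have "lam / (rho * D) * (lam * rho * D) = lam\<^sup>2" using rho D by (simp add: power2_eq_square field_simps)
      finally have "a * sqrt (lam * rho * D) = lam" using lam by simp
      then show ?thesis using a0 by (simp add: field_simps)
    qed
    have "\<bar>- 2 * lam * xs / 3\<bar> \<ge> sqrt (lam * rho * D) / 3"
      unfolding sq xs_def using lam a0 by simp
    then show ?thesis using yhY xsX hatd trued by blast
  qed
  show ?thesis unfolding Let_def using P1 P2 by blast
qed

end
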